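(* For all integers $r,t$ with $3\le t\le r$, \[ f_t(r,r)=\rho_t\big(T(r+1,r)\big)=\frac{1}{r+1}\Big(\binom{r+1}{t}-\binom{r-1}{t-2}\Big), \] where $T(r+1,r)$ is $K_{r+1}$ with one edge removed.
   Context: $\mathcal{G}(\Delta,\omega)$ denotes the class of finite simple graphs $G$ with maximum degree $\Delta(G)\le\Delta$ and clique number $\omega(G)\le\omega$. $k_t(G)$ is the number of copies of $K_t$ in $G$ and $\rho_t(G)=k_t(G)/|V(G)|$. $f_t(\Delta,\omega)=\sup\{\rho_t(G): G\in\mathcal{G}(\Delta,\omega),\ |V(G)|\ge 1\}$. $T(n,r)$ denotes the $r$-partite Turán graph on $n$ vertices. *)

theory Defs
  imports Complex_Main
begin

text \<open>A finite simple graph on vertex set V (a finite set of naturals; every finite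
graph is isomorphic to one of this form) with edge set E, a set of 2-element subsets of V.\<close>
definition simple_graph :: "nat set \<Rightarrow> nat set set \<Rightarrow> bool" where
  "simple_graph V E \<longleftrightarrow> finite V \<and> (\<forall>e\<in>E. e \<subseteq> V \<and> card e = 2)"

definition degree :: "nat set set \<Rightarrow> nat \<Rightarrow> nat" where
  "degree E v = card {u. {u, v} \<in> E}"

definition is_clique :: "nat set \<Rightarrow> nat set set \<Rightarrow> nat set \<Rightarrow> bool" where
  "is_clique V E S \<longleftrightarrow> S \<subseteq> V \<and> (\<forall>u\<in>S. \<forall>w\<in>S. u \<noteq> w \<longrightarrow> {u, w} \<in> E)"

definition k_t :: "nat \<Rightarrow> nat set \<Rightarrow> nat set set \<Rightarrow> nat" where
  "k_t t V E = card {S. is_clique V E S \<and> card S = t}"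

definition rho_t :: "nat \<Rightarrow> nat set \<Rightarrow> nat set set \<Rightarrow> real" where
  "rho_t t V E = real (k_t t V E) / real (card V)"

definition in_class :: "nat \<Rightarrow> nat \<Rightarrow> nat set \<Rightarrow> nat set set \<Rightarrow> bool" where
  "in_class \<Delta> \<omega> V E \<longleftrightarrow> simple_graph V E \<and> (\<forall>v\<in>V. degree E v \<le> \<Delta>)
     \<and> (\<forall>S. is_clique V E S \<longrightarrow> card S \<le> \<omega>)"

definition f_t :: "nat \<Rightarrow> nat \<Rightarrow> nat \<Rightarrow> real" where
  "f_t t \<Delta> \<omega> = Sup {rho_t t V E | V E. in_class \<Delta> \<omega> V E \<and> card V \<ge> 1}"

text \<open>Turan graph T(n,r): vertices 0..n-1, part of vertex v is v mod r (balanced parts),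
edges join vertices in different parts.\<close>
definition turan_V :: "nat \<Rightarrow> nat set" where
  "turan_V n = {0..<n}"

definition turan_E :: "nat \<Rightarrow> nat \<Rightarrow> nat set set" where
  "turan_E n r = {{u, v} | u v. u < n \<and> v < n \<and> u mod r \<noteq> v mod r}"

end

theory Submission
  imports Defs
begin


lemma card_supsets:
  assumes "finite X" "P \<subseteq> X" "card P \<le> k"
  shows "card {F. F \<subseteq> X \<and> card F = k \<and> P \<subseteq> F} = (card X - card P) choose (k - card P)"
proof -
  have fP: "finite P" using assms finite_subset by blast
  have "bij_betw (\<lambda>F. F - P) {F. F \<subseteq> X \<and> card F = k \<and> P \<subseteq> F} {G. G \<subseteq> X - P \<and> card G = k - card P}"
  proof (rule bij_betw_byWitness[where f'="\<lambda>G. G \<union> P"])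
    show "\<forall>a\<in>{F. F \<subseteq> X \<and> card F = k \<and> P \<subseteq> F}. a - P \<union> P = a" by blast
    show "\<forall>a\<in>{G. G \<subseteq> X - P \<and> card G = k - card P}. a \<union> P - P = a" by blast
    show "(\<lambda>F. F - P) ` {F. F \<subseteq> X \<and> card F = k \<and> P \<subseteq> F} \<subseteq> {G. G \<subseteq> X - P \<and> card G = k - card P}"
      using fP by (auto simp: card_Diff_subset)
    show "(\<lambda>G. G \<union> P) ` {G. G \<subseteq> X - P \<and> card G = k - card P} \<subseteq> {F. F \<subseteq> X \<and> card F = k \<and> P \<subseteq> F}"
    proof (rule image_subsetI)
      fix G assume "G \<in> {G. G \<subseteq> X - P \<and> card G = k - card P}"
      then have G: "G \<subseteq> X - P" "card G = k - card P" by auto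
      have fG: "finite G" using G assms(1) finite_subset by blast
      have "card (G \<union> P) = card G + card P" using G fG fP by (subst card_Un_disjoint) auto
      then have "card (G \<union> P) = k" using G assms(3) by simp
      then show "G \<union> P \<in> {F. F \<subseteq> X \<and> card F = k \<and> P \<subseteq> F}" using G assms(2) by auto
    qed
  qed
  then have "card {F. F \<subseteq> X \<and> card F = k \<and> P \<subseteq> F} = card {G. G \<subseteq> X - P \<and> card G = k - card P}"
    by (rule bij_betw_same_card)
  also have "\<dots> = card (X - P) choose (k - card P)" using assms(1) by (simp add: n_subsets)
  also have "card (X - P) = card X - card P" using fP assms(2) by (simp add: card_Diff_subset)
  finally show ?thesis .
qed

lemma card_supsets_big:
  assumes "finite X" "P \<subseteq> X" "k < card P"
  shows "card {F. F \<subseteq> X \<and> card F = k \<and> P \<subseteq> F} = 0"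
proof -
  have "{F. F \<subseteq> X \<and> card F = k \<and> P \<subseteq> F} = {}"
  proof safe
    fix F assume "F \<subseteq> X" "P \<subseteq> F" "k = card F"
    then have "card P \<le> card F" using assms(1) finite_subset card_mono by metis
    then show "F \<in> {}" using \<open>k = card F\<close> assms(3) by simp
  qed
  then show ?thesis by (metis card.empty)
qed

lemma card_nonsupsets:
  assumes "finite X" "P \<subseteq> X" "card P \<le> k"
  shows "card {F. F \<subseteq> X \<and> card F = k \<and> \<not> P \<subseteq> F} = (card X choose k) - ((card X - card P) choose (k - card P))"
proof -
  have eq: "{F. F \<subseteq> X \<and> card F = k \<and> \<not> P \<subseteq> F} = {F. F \<subseteq> X \<and> card F = k} - {F. F \<subseteq> X \<and> card F = k \<and> P \<subseteq> F}"
    by blast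
  have fin: "finite {F. F \<subseteq> X \<and> card F = k}" using assms(1) by simp
  have "card ({F. F \<subseteq> X \<and> card F = k} - {F. F \<subseteq> X \<and> card F = k \<and> P \<subseteq> F})
     = card {F. F \<subseteq> X \<and> card F = k} - card {F. F \<subseteq> X \<and> card F = k \<and> P \<subseteq> F}"
    by (rule card_Diff_subset) (use fin in \<open>auto intro: finite_subset[OF _ fin]\<close>)
  then show ?thesis unfolding eq using assms by (simp add: n_subsets card_supsets)
qed




definition nb :: "nat set set \<Rightarrow> nat \<Rightarrow> nat set" where "nb E v = {u. {u, v} \<in> E}"
definition cl :: "nat \<Rightarrow> nat set \<Rightarrow> nat set set \<Rightarrow> nat set set" where
  "cl t V E = {S. is_clique V E S \<and> card S = t}"

lemma sg_edge: assumes "simple_graph V E" "{a,b} \<in> E" shows "a \<noteq> b" "a \<in> V" "b \<in> V"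
  using assms unfolding simple_graph_def by (auto simp: card_insert_if split: if_splits)

lemma nb_sub: assumes "simple_graph V E" shows "nb E v \<subseteq> V - {v}"
  using sg_edge[OF assms] unfolding nb_def by blast

lemma sg_fin: "simple_graph V E \<Longrightarrow> finite V" by (simp add: simple_graph_def)

lemma degree_nb: "degree E v = card (nb E v)" by (simp add: degree_def nb_def)

lemma turan_edge: "{a,b} \<in> turan_E n r \<longleftrightarrow> a < n \<and> b < n \<and> a mod r \<noteq> b mod r"
  unfolding turan_E_def by (auto simp: doubleton_eq_iff)

lemma mod_case:
  fixes r a b :: nat
  assumes "1 \<le> r" "a < r + 1" "b < r + 1"
  shows "(a mod r = b mod r) \<longleftrightarrow> (a = b \<or> {a,b} = {0,r})"
proof -
  have ha: "a mod r = (if a = r then 0 else a)" using assms by (cases "a = r") (auto simp: mod_less)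
  have hb: "b mod r = (if b = r then 0 else b)" using assms by (cases "b = r") (auto simp: mod_less)
  show ?thesis unfolding ha hb using assms by (auto simp: doubleton_eq_iff)
qed

lemma turan_sg: "simple_graph (turan_V n) (turan_E n r)"
  unfolding simple_graph_def turan_V_def turan_E_def by (auto simp: card_insert_if)

lemma turan_clique:
  assumes "1 \<le> r"
  shows "is_clique (turan_V (r+1)) (turan_E (r+1) r) S \<longleftrightarrow> S \<subseteq> {0..<r+1} \<and> \<not> {0,r} \<subseteq> S"
proof
  assume c: "is_clique (turan_V (r+1)) (turan_E (r+1) r) S"
  then have s: "S \<subseteq> {0..<r+1}" by (simp add: is_clique_def turan_V_def)
  moreover have "\<not> {0,r} \<subseteq> S"
  proof
    assume "{0,r} \<subseteq> S"
    then have "{0,r} \<in> turan_E (r+1) r" using c assms unfolding is_clique_def by auto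
    then have "(0::nat) mod r \<noteq> r mod r" using turan_edge[of 0 r "r+1" r] by blast
    then show False by simp
  qed
  ultimately show "S \<subseteq> {0..<r+1} \<and> \<not> {0,r} \<subseteq> S" by blast
next
  assume h: "S \<subseteq> {0..<r+1} \<and> \<not> {0,r} \<subseteq> S"
  show "is_clique (turan_V (r+1)) (turan_E (r+1) r) S"
    unfolding is_clique_def turan_V_def
  proof (intro conjI ballI impI)
    show "S \<subseteq> {0..<r+1}" using h by blast
    fix u w assume uw: "u \<in> S" "w \<in> S" "u \<noteq> w"
    have lt: "u < r+1" "w < r+1" using uw h by auto
    have ne: "{u,w} \<noteq> {0,r}" using uw h by auto
    have e: "(u mod r = w mod r) = (u = w \<or> {u,w} = {0,r})" by (rule mod_case[OF assms lt])
    have "u mod r \<noteq> w mod r" using e ne uw(3) by argo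
    then show "{u,w} \<in> turan_E (r+1) r" using \<open>u < r+1\<close> \<open>w < r+1\<close> by (simp add: turan_edge)
  qed
qed

lemma turan_cl:
  assumes "1 \<le> r"
  shows "cl t (turan_V (r+1)) (turan_E (r+1) r) = {F. F \<subseteq> {0..<r+1} \<and> card F = t \<and> \<not> {0,r} \<subseteq> F}"
  unfolding cl_def using turan_clique[OF assms] by blast

lemma turan_kt:
  assumes "1 \<le> r" "2 \<le> t"
  shows "k_t t (turan_V (r+1)) (turan_E (r+1) r) = ((r+1) choose t) - ((r-1) choose (t-2))"
proof -
  have c2: "card {0,r} = 2" using assms by simp
  have "k_t t (turan_V (r+1)) (turan_E (r+1) r) = card {F. F \<subseteq> {0..<r+1} \<and> card F = t \<and> \<not> {0,r} \<subseteq> F}"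
    using turan_cl[OF assms(1)] by (simp add: k_t_def cl_def)
  also have "\<dots> = (card {0..<r+1} choose t) - ((card {0..<r+1} - card {0,r}) choose (t - card {0,r}))"
    by (rule card_nonsupsets) (use assms c2 in auto)
  finally show ?thesis using c2 by simp
qed

lemma turan_class:
  assumes "1 \<le> r"
  shows "in_class r r (turan_V (r+1)) (turan_E (r+1) r)"
  unfolding in_class_def
proof (intro conjI ballI allI impI)
  show sg: "simple_graph (turan_V (r+1)) (turan_E (r+1) r)" by (rule turan_sg)
  fix v assume "v \<in> turan_V (r+1)"
  have "degree (turan_E (r+1) r) v = card (nb (turan_E (r+1) r) v)" by (rule degree_nb)
  also have "\<dots> \<le> card (turan_V (r+1) - {v})"
    by (rule card_mono) (use nb_sub[OF sg] in \<open>auto simp: turan_V_def\<close>)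
  also have "\<dots> = r" using \<open>v \<in> turan_V (r+1)\<close> by (simp add: turan_V_def)
  finally show "degree (turan_E (r+1) r) v \<le> r" .
next
  fix S assume "is_clique (turan_V (r+1)) (turan_E (r+1) r) S"
  then have h: "S \<subseteq> {0..<r+1}" "\<not> {0,r} \<subseteq> S" using turan_clique[OF assms] by auto
  show "card S \<le> r"
  proof (cases "r \<in> S")
    case False
    have "S \<subseteq> {0..<r}"
    proof
      fix x assume "x \<in> S"
      have "x \<noteq> r" using \<open>x \<in> S\<close> False by metis
      have "x < r+1" using h \<open>x \<in> S\<close> by auto
      note this \<open>x \<noteq> r\<close>
      then show "x \<in> {0..<r}" by simp
    qed
    then show ?thesis using card_mono[of "{0..<r}" S] by simp
  next
    case True
    then have "0 \<notin> S" using h by auto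
    have "S \<subseteq> {1..<r+1}"
    proof
      fix x assume "x \<in> S"
      have "x \<noteq> 0" using \<open>x \<in> S\<close> \<open>0 \<notin> S\<close> by metis
      have "x < r+1" using h \<open>x \<in> S\<close> by auto
      note this \<open>x \<noteq> 0\<close>
      then show "x \<in> {1..<r+1}" by simp
    qed
    then show ?thesis using card_mono[of "{1..<r+1}" S] by simp
  qed
qed




definition cc :: "nat \<Rightarrow> nat \<Rightarrow> real" where
  "cc r t = (real ((r+1) choose t) - real ((r-1) choose (t-2))) / real (r+1)"

lemma tbin: assumes "1 \<le> t" shows "real t * real ((r+1) choose t) = real (r+1) * real (r choose (t-1))"
proof -
  have "Suc r * (r choose (t-1)) = (Suc r choose Suc (t-1)) * Suc (t-1)" by (rule Suc_times_binomial_eq)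
  then have "(r+1) * (r choose (t-1)) = ((r+1) choose t) * t" using assms by simp
  then have "real ((r+1) * (r choose (t-1))) = real (((r+1) choose t) * t)" by (simp only:)
  then show ?thesis by (simp add: algebra_simps)
qed

lemma A_eq: assumes "1 \<le> t"
  shows "real t * cc r t = real (r choose (t-1)) - real t * real ((r-1) choose (t-2)) / real (r+1)"
proof -
  have "real t * cc r t = (real t * real ((r+1) choose t) - real t * real ((r-1) choose (t-2))) / real (r+1)"
    by (simp add: cc_def algebra_simps diff_divide_distrib)
  also have "\<dots> = (real (r+1) * real (r choose (t-1)) - real t * real ((r-1) choose (t-2))) / real (r+1)"
    using tbin[OF assms] by simp
  also have "\<dots> = real (r choose (t-1)) - real t * real ((r-1) choose (t-2)) / real (r+1)"
    by (simp add: diff_divide_distrib)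
  finally show ?thesis .
qed

lemma pascal': assumes "2 \<le> t" "1 \<le> r"
  shows "r choose (t-1) = ((r-1) choose (t-2)) + ((r-1) choose (t-1))"
proof -
  have "Suc (r-1) choose Suc (t-2) = ((r-1) choose (t-2)) + ((r-1) choose Suc (t-2))" by (rule binomial_Suc_Suc)
  moreover have "Suc (r-1) = r" "Suc (t-2) = t-1" using assms by auto
  ultimately show ?thesis by simp
qed

lemma bound_low: assumes "2 \<le> t" "t \<le> r"
  shows "real ((r-1) choose (t-1)) \<le> real t * cc r t"
proof -
  have p: "real (r choose (t-1)) = real ((r-1) choose (t-2)) + real ((r-1) choose (t-1))"
    using pascal'[of t r] assms by simp
  have "real t * real ((r-1) choose (t-2)) / real (r+1) \<le> real ((r-1) choose (t-2))"
  proof -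
    have "real t \<le> real (r+1)" using assms by simp
    then have "real t * real ((r-1) choose (t-2)) \<le> real (r+1) * real ((r-1) choose (t-2))"
      by (intro mult_right_mono) auto
    then show ?thesis by (simp add: divide_le_eq algebra_simps)
  qed
  then show ?thesis using A_eq[of t r] assms p by simp
qed

lemma bound_t3: assumes "3 \<le> r"
  shows "real (r choose 2) - 3 \<le> real 3 * cc r 3"
    and "r \<le> 5 \<Longrightarrow> real (r choose 2) - 2 \<le> real 3 * cc r 3"
proof -
  have e: "real 3 * cc r 3 = real (r choose 2) - 3 * real (r - 1) / real (r+1)"
    using A_eq[of 3 r] by (simp add: numeral_eq_Suc)
  have "3 * real (r - 1) / real (r+1) \<le> 3" using assms by (simp add: divide_le_eq)
  then show "real (r choose 2) - 3 \<le> real 3 * cc r 3" using e by linarith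
  assume "r \<le> 5"
  then have "3 * real (r - 1) \<le> 2 * real (r+1)" using assms by (simp add: of_nat_diff)
  then have "3 * real (r - 1) / real (r+1) \<le> 2" by (simp add: divide_le_eq)
  then show "real (r choose 2) - 2 \<le> real 3 * cc r 3" using e by linarith
qed

lemma poly_ineq:
  fixes t r :: nat
  assumes "4 \<le> t" "t \<le> r"
  shows "real t * (real r - 1) * (real r - 2) \<le> (real t - 2) * (real r + 1) * (2 * real r - real t - 1)"
proof -
  obtain a where a: "t = 4 + a" using assms(1) le_Suc_ex by blast
  obtain b where b: "r = t + b" using assms(2) le_Suc_ex by blast
  have "(real t - 2) * (real r + 1) * (2 * real r - real t - 1) - real t * (real r - 1) * (real r - 2)
     = 6 + 6 * real b + 5 * real a + 6 * real a * real b + real a * real b ^ 2 + real a ^ 2 + real a ^ 2 * real b"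
    unfolding b a by (simp add: algebra_simps power2_eq_square)
  moreover have "0 \<le> 6 + 6 * real b + 5 * real a + 6 * real a * real b + real a * real b ^ 2 + real a ^ 2 + real a ^ 2 * real b"
    by simp
  ultimately show ?thesis by linarith
qed

lemma bound_t4: assumes "4 \<le> t" "t \<le> r"
  shows "real (r choose (t-1)) - (2 * real ((r-2) choose (t-3)) - real ((r-3) choose (t-4))) \<le> real t * cc r t"
proof -
  define B where "B = real ((r-3) choose (t-4))"
  define X where "X = real ((r-2) choose (t-3))"
  define Y where "Y = real ((r-1) choose (t-2))"
  have h1: "Suc (r-3) * ((r-3) choose (t-4)) = (Suc (r-3) choose Suc (t-4)) * Suc (t-4)" by (rule Suc_times_binomial_eq)
  have h2: "Suc (r-2) * ((r-2) choose (t-3)) = (Suc (r-2) choose Suc (t-3)) * Suc (t-3)" by (rule Suc_times_binomial_eq)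
  have "Suc (r-3) = r - 2" "Suc (t-4) = t-3" "Suc (r-2) = r-1" "Suc (t-3) = t - 2" using assms by auto
  then have h1': "(r-2) * ((r-3) choose (t-4)) = ((r-2) choose (t-3)) * (t-3)"
    and h2': "(r-1) * ((r-2) choose (t-3)) = ((r-1) choose (t-2)) * (t-2)" using h1 h2 by simp_all
  have X1: "(real r - 2) * B = X * (real t - 3)"
    using arg_cong[OF h1', of real] assms unfolding B_def X_def by (simp add: of_nat_diff)
  have Y1: "(real r - 1) * X = Y * (real t - 2)"
    using arg_cong[OF h2', of real] assms unfolding X_def Y_def by (simp add: of_nat_diff)
  have B0: "0 \<le> B" unfolding B_def by simp
  have P: "real t * (real r - 1) * (real r - 2) \<le> (real t - 2) * (real r + 1) * (2 * real r - real t - 1)"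
    by (rule poly_ineq[OF assms])
  have t2: "real t - 2 > 0" "real t - 3 > 0" using assms by auto
  have key: "real t * Y \<le> real (r+1) * (2 * X - B)"
  proof -
    have "(real t - 2) * (real t - 3) * (real t * Y) = real t * (real t - 3) * (Y * (real t - 2))"
      by (simp add: algebra_simps)
    also have "\<dots> = real t * (real t - 3) * ((real r - 1) * X)" by (simp only: Y1)
    also have "\<dots> = real t * (real r - 1) * (X * (real t - 3))" by (simp add: algebra_simps)
    also have "\<dots> = real t * (real r - 1) * ((real r - 2) * B)" by (simp only: X1)
    also have "\<dots> = (real t * (real r - 1) * (real r - 2)) * B" by (simp add: algebra_simps)
    also have "\<dots> \<le> ((real t - 2) * (real r + 1) * (2 * real r - real t - 1)) * B"
      by (rule mult_right_mono[OF P B0])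
    also have "\<dots> = (real t - 2) * (real r + 1) * (2 * ((real r - 2) * B) - (real t - 3) * B)"
      by (simp add: algebra_simps)
    also have "\<dots> = (real t - 2) * (real r + 1) * (2 * (X * (real t - 3)) - (real t - 3) * B)"
      by (simp only: X1)
    also have "\<dots> = (real t - 2) * (real t - 3) * (real (r+1) * (2 * X - B))"
      by (simp add: algebra_simps)
    finally have "(real t - 2) * (real t - 3) * (real t * Y) \<le> (real t - 2) * (real t - 3) * (real (r+1) * (2 * X - B))" .
    moreover have "(real t - 2) * (real t - 3) > 0" using t2 by simp
    ultimately show ?thesis by (simp add: mult_le_cancel_left_pos)
  qed
  have rp: "real (r+1) > 0" by simp
  have "real t * Y / real (r+1) \<le> 2 * X - B"
    using key unfolding pos_divide_le_eq[OF rp] by (simp add: mult.commute)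
  then show ?thesis using A_eq[of t r] assms unfolding B_def X_def Y_def by simp
qed




lemma choose_step: "n choose k \<le> Suc n choose k"
  by (cases k) simp_all

lemma choose_mono_n: "m \<le> n \<Longrightarrow> m choose k \<le> n choose k"
proof (induction n)
  case 0 then show ?case by simp
next
  case (Suc n)
  show ?case
  proof (cases "m = Suc n")
    case True then show ?thesis by simp
  next
    case False
    then have "m \<le> n" using Suc.prems by simp
    then show ?thesis using Suc.IH choose_step[of n k] by linarith
  qed
qed

lemma cl_fin: "finite V \<Longrightarrow> finite (cl t V E)"
proof -
  assume "finite V"
  moreover have "cl t V E \<subseteq> Pow V" by (auto simp: cl_def is_clique_def)
  ultimately show ?thesis using finite_subset by blast
qed

lemma sum_cnt:
  assumes "finite V"
  shows "(\<Sum>v\<in>V. card {K \<in> cl t V E. v \<in> K}) = t * card (cl t V E)"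
proof -
  have fC: "finite (cl t V E)" using cl_fin[OF assms] .
  have "(\<Sum>v\<in>V. card {K \<in> cl t V E. v \<in> K}) = (\<Sum>v\<in>V. \<Sum>K\<in>cl t V E. if v \<in> K then 1 else 0)"
  proof (rule sum.cong)
    fix v assume "v \<in> V"
    have "card {K \<in> cl t V E. v \<in> K} = (\<Sum>K\<in>{K \<in> cl t V E. v \<in> K}. (1::nat))" by simp
    also have "\<dots> = (\<Sum>K\<in>cl t V E. if v \<in> K then 1 else 0)" by (rule sum.inter_filter[OF fC])
    finally show "card {K \<in> cl t V E. v \<in> K} = (\<Sum>K\<in>cl t V E. if v \<in> K then 1 else 0)" .
  qed simp
  also have "\<dots> = (\<Sum>K\<in>cl t V E. \<Sum>v\<in>V. if v \<in> K then 1 else 0)" by (rule sum.swap)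
  also have "\<dots> = (\<Sum>K\<in>cl t V E. t)"
  proof (rule sum.cong)
    fix K assume K: "K \<in> cl t V E"
    then have KV: "K \<subseteq> V" "card K = t" by (auto simp: cl_def is_clique_def)
    have "(\<Sum>v\<in>V. if v \<in> K then 1 else 0) = (\<Sum>v\<in>{v \<in> V. v \<in> K}. (1::nat))"
      by (rule sum.inter_filter[OF assms, symmetric])
    also have "{v \<in> V. v \<in> K} = K" using KV by blast
    finally show "(\<Sum>v\<in>V. if v \<in> K then 1 else 0) = t" using KV by simp
  qed simp
  also have "\<dots> = t * card (cl t V E)" by simp
  finally show ?thesis .
qed

lemma induced_class:
  assumes "in_class r r V E"
  shows "in_class r r (V - S) {e \<in> E. e \<subseteq> V - S}"
  using assms unfolding in_class_def simple_graph_def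
proof (intro conjI ballI allI impI)
  assume a: "(finite V \<and> (\<forall>e\<in>E. e \<subseteq> V \<and> card e = 2)) \<and> (\<forall>v\<in>V. degree E v \<le> r) \<and> (\<forall>S. is_clique V E S \<longrightarrow> card S \<le> r)"
  show "finite (V - S)" using a by simp
  show "\<And>e. e \<in> {e \<in> E. e \<subseteq> V - S} \<Longrightarrow> e \<subseteq> V - S" by simp
  show "\<And>e. e \<in> {e \<in> E. e \<subseteq> V - S} \<Longrightarrow> card e = 2" using a by simp
  fix v assume v: "v \<in> V - S"
  have fin: "finite {u. {u, v} \<in> E}"
  proof -
    have "{u. {u, v} \<in> E} \<subseteq> V" using a by auto
    then show ?thesis using a finite_subset by blast
  qed
  have "degree {e \<in> E. e \<subseteq> V - S} v \<le> degree E v"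
    unfolding degree_def by (rule card_mono[OF fin]) auto
  then show "degree {e \<in> E. e \<subseteq> V - S} v \<le> r" using a v by auto
next
  fix T assume a: "(finite V \<and> (\<forall>e\<in>E. e \<subseteq> V \<and> card e = 2)) \<and> (\<forall>v\<in>V. degree E v \<le> r) \<and> (\<forall>S. is_clique V E S \<longrightarrow> card S \<le> r)"
    and c: "is_clique (V - S) {e \<in> E. e \<subseteq> V - S} T"
  have "is_clique V E T" using c unfolding is_clique_def by auto
  then show "card T \<le> r" using a by blast
qed

lemma cl_induced:
  "cl t (V - S) {e \<in> E. e \<subseteq> V - S} = {K \<in> cl t V E. K \<inter> S = {}}"
  unfolding cl_def is_clique_def by auto

lemma card_split:
  assumes "finite V"
  shows "card (cl t V E) = card (cl t (V - S) {e \<in> E. e \<subseteq> V - S}) + card {K \<in> cl t V E. K \<inter> S \<noteq> {}}"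
proof -
  have fC: "finite (cl t V E)" using cl_fin[OF assms] .
  have "cl t V E = {K \<in> cl t V E. K \<inter> S = {}} \<union> {K \<in> cl t V E. K \<inter> S \<noteq> {}}" by blast
  then have "card (cl t V E) = card ({K \<in> cl t V E. K \<inter> S = {}} \<union> {K \<in> cl t V E. K \<inter> S \<noteq> {}})" by simp
  also have "\<dots> = card {K \<in> cl t V E. K \<inter> S = {}} + card {K \<in> cl t V E. K \<inter> S \<noteq> {}}"
    by (rule card_Un_disjoint) (use fC in auto)
  finally show ?thesis unfolding cl_induced .
qed

locale cg =
  fixes V :: "nat set" and E :: "nat set set" and r t :: nat
  assumes cls: "in_class r r V E" and t3: "3 \<le> t" and tr: "t \<le> r"
begin

lemma sg: "simple_graph V E" using cls by (simp add: in_class_def)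
lemma finV: "finite V" using sg by (simp add: simple_graph_def)
lemma deg: "v \<in> V \<Longrightarrow> card (nb E v) \<le> r" using cls by (simp add: in_class_def degree_nb)
lemma om: "is_clique V E S \<Longrightarrow> card S \<le> r" using cls by (simp add: in_class_def)
lemma edge: "{a,b} \<in> E \<Longrightarrow> a \<noteq> b \<and> a \<in> V \<and> b \<in> V" using sg_edge[OF sg] by blast
lemma nbV: "nb E v \<subseteq> V - {v}" by (rule nb_sub[OF sg])
lemma finnb: "finite (nb E v)" using nbV finV finite_subset by blast
lemma nb_iff: "a \<in> nb E b \<longleftrightarrow> {a,b} \<in> E" by (simp add: nb_def)

definition Q where "Q v = {F. F \<subseteq> nb E v \<and> card F = t - 1 \<and> (\<forall>a\<in>F. \<forall>b\<in>F. a \<noteq> b \<longrightarrow> {a,b} \<in> E)}"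

lemma cnt_eq: assumes "v \<in> V" shows "card {K \<in> cl t V E. v \<in> K} = card (Q v)"
proof -
  have "bij_betw (\<lambda>K. K - {v}) {K \<in> cl t V E. v \<in> K} (Q v)"
  proof (rule bij_betw_byWitness[where f'="\<lambda>F. insert v F"])
    show "\<forall>a\<in>{K \<in> cl t V E. v \<in> K}. insert v (a - {v}) = a" by auto
    show "\<forall>a\<in>Q v. insert v a - {v} = a" using nbV by (auto simp: Q_def)
    show "(\<lambda>K. K - {v}) ` {K \<in> cl t V E. v \<in> K} \<subseteq> Q v"
    proof (rule image_subsetI)
      fix K assume "K \<in> {K \<in> cl t V E. v \<in> K}"
      then have K: "is_clique V E K" "card K = t" "v \<in> K" by (auto simp: cl_def)
      have fK: "finite K" using K(1) finV finite_subset by (auto simp: is_clique_def)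
      have "K - {v} \<subseteq> nb E v" using K(1,3) by (auto simp: is_clique_def nb_def)
      moreover have "card (K - {v}) = t - 1" using K fK by simp
      moreover have "\<forall>a\<in>K - {v}. \<forall>b\<in>K - {v}. a \<noteq> b \<longrightarrow> {a,b} \<in> E" using K(1) by (auto simp: is_clique_def)
      ultimately show "K - {v} \<in> Q v" by (simp add: Q_def)
    qed
    show "(\<lambda>F. insert v F) ` Q v \<subseteq> {K \<in> cl t V E. v \<in> K}"
    proof (rule image_subsetI)
      fix F assume "F \<in> Q v"
      then have F: "F \<subseteq> nb E v" "card F = t - 1" "\<forall>a\<in>F. \<forall>b\<in>F. a \<noteq> b \<longrightarrow> {a,b} \<in> E" by (auto simp: Q_def)
      have vF: "v \<notin> F" using F(1) nbV by blast
      have fF: "finite F" using F(1) finnb finite_subset by blast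
      have "is_clique V E (insert v F)"
        unfolding is_clique_def
      proof (intro conjI ballI impI)
        show "insert v F \<subseteq> V" using F(1) nbV assms by blast
        fix a b assume ab: "a \<in> insert v F" "b \<in> insert v F" "a \<noteq> b"
        show "{a,b} \<in> E"
        proof (cases "a = v")
          case True
          then have "b \<in> F" using ab by auto
          then have "{b,a} \<in> E" using F(1) True by (auto simp: nb_def)
          then show ?thesis by (simp add: insert_commute)
        next
          case False
          then have aF: "a \<in> F" using ab by auto
          show ?thesis
          proof (cases "b = v")
            case True
            then show ?thesis using aF F(1) by (auto simp: nb_def)
          next
            case False
            then show ?thesis using aF ab F(3) by auto
          qed
        qed
      qed
      moreover have "card (insert v F) = t" using vF fF F(2) t3 by simp
      ultimately show "insert v F \<in> {K \<in> cl t V E. v \<in> K}" by (simp add: cl_def)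
    qed
  qed
  then show ?thesis by (rule bij_betw_same_card)
qed

definition NE where "NE v = {p. \<exists>a b. p = {a,b} \<and> a \<in> nb E v \<and> b \<in> nb E v \<and> a \<noteq> b \<and> {a,b} \<notin> E}"
definition M where "M v = {F. F \<subseteq> nb E v \<and> card F = t - 1 \<and> (\<exists>p\<in>NE v. p \<subseteq> F)}"

lemma Q_bound: "card (Q v) \<le> (card (nb E v) choose (t-1)) - card (M v)"
proof -
  have fS: "finite {F. F \<subseteq> nb E v \<and> card F = t - 1}" using finnb by simp
  have "Q v \<subseteq> {F. F \<subseteq> nb E v \<and> card F = t - 1} - M v"
  proof
    fix F assume F: "F \<in> Q v"
    have "\<not> (\<exists>p\<in>NE v. p \<subseteq> F)"
    proof
      assume "\<exists>p\<in>NE v. p \<subseteq> F"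
      then obtain a b where "a \<in> F" "b \<in> F" "a \<noteq> b" "{a,b} \<notin> E" by (auto simp: NE_def)
      then show False using F by (auto simp: Q_def)
    qed
    then show "F \<in> {F. F \<subseteq> nb E v \<and> card F = t - 1} - M v" using F by (auto simp: Q_def M_def)
  qed
  then have "card (Q v) \<le> card ({F. F \<subseteq> nb E v \<and> card F = t - 1} - M v)"
    by (rule card_mono[OF finite_Diff[OF fS]])
  also have "\<dots> = card {F. F \<subseteq> nb E v \<and> card F = t - 1} - card (M v)"
    by (rule card_Diff_subset) (use fS in \<open>auto simp: M_def intro: finite_subset[OF _ fS]\<close>)
  also have "\<dots> = (card (nb E v) choose (t-1)) - card (M v)" using finnb by (simp add: n_subsets)
  finally show ?thesis .
qed

lemma Q_low: assumes "card (nb E v) < r" shows "card (Q v) \<le> (r-1) choose (t-1)"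
proof -
  have "card (Q v) \<le> card (nb E v) choose (t-1)" by (meson Q_bound diff_le_self le_trans)
  also have "\<dots> \<le> (r-1) choose (t-1)" by (rule choose_mono_n) (use assms in simp)
  finally show ?thesis .
qed

lemma NE_elem: "p \<in> NE v \<Longrightarrow> \<exists>a b. p = {a,b} \<and> a \<in> nb E v \<and> b \<in> nb E v \<and> a \<noteq> b \<and> {a,b} \<notin> E"
  by (simp add: NE_def)

lemma NE_fin: "finite (NE v)"
proof -
  have "NE v \<subseteq> Pow (nb E v)" by (auto simp: NE_def)
  then show ?thesis using finnb finite_subset by blast
qed

lemma NE_ne: assumes "v \<in> V" "card (nb E v) = r" shows "NE v \<noteq> {}"
proof
  assume e: "NE v = {}"
  have "is_clique V E (insert v (nb E v))"
    unfolding is_clique_def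
  proof (intro conjI ballI impI)
    show "insert v (nb E v) \<subseteq> V" using nbV assms by blast
    fix a b assume ab: "a \<in> insert v (nb E v)" "b \<in> insert v (nb E v)" "a \<noteq> b"
    show "{a,b} \<in> E"
    proof (cases "a = v")
      case True
      then show ?thesis using ab by (auto simp: nb_def insert_commute)
    next
      case False
      show ?thesis
      proof (cases "b = v")
        case True
        then show ?thesis using ab False by (auto simp: nb_def)
      next
        case False
        then have "a \<in> nb E v" "b \<in> nb E v" using ab \<open>a \<noteq> v\<close> by auto
        then show ?thesis using e ab(3) unfolding NE_def by blast
      qed
    qed
  qed
  then have "card (insert v (nb E v)) \<le> r" by (rule om)
  moreover have "v \<notin> nb E v" using nbV by blast
  then have "card (insert v (nb E v)) = r + 1" using assms finnb by simp
  ultimately show False by simp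
qed

lemma M_t3: assumes "t = 3" shows "card (NE v) \<le> card (M v)"
proof (rule card_mono)
  show "finite (M v)"
  proof -
    have "M v \<subseteq> Pow (nb E v)" by (auto simp: M_def)
    then show ?thesis using finnb finite_subset by blast
  qed
  show "NE v \<subseteq> M v"
  proof
    fix p assume "p \<in> NE v"
    then obtain a b where "p = {a,b}" "a \<in> nb E v" "b \<in> nb E v" "a \<noteq> b" "{a,b} \<notin> E" by (auto simp: NE_def)
    then have "p \<subseteq> nb E v" "card p = t - 1" using assms by auto
    then show "p \<in> M v" unfolding M_def using \<open>p \<in> NE v\<close> by blast
  qed
qed

lemma M_t4:
  assumes "4 \<le> t" "card (nb E v) = r" "p1 \<in> NE v" "p2 \<in> NE v" "p1 \<noteq> p2"
  shows "2 * ((r-2) choose (t-3)) \<le> card (M v) + ((r-3) choose (t-4))"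
proof -
  define U where "U p = {F. F \<subseteq> nb E v \<and> card F = t - 1 \<and> p \<subseteq> F}" for p
  obtain a b where ab: "p1 = {a,b}" "a \<in> nb E v" "b \<in> nb E v" "a \<noteq> b" using NE_elem[OF assms(3)] by blast
  obtain c d where cd: "p2 = {c,d}" "c \<in> nb E v" "d \<in> nb E v" "c \<noteq> d" using NE_elem[OF assms(4)] by blast
  have cU: "card (U p) = (r-2) choose (t-3)" if pNE: "p \<in> NE v" for p
  proof -
    obtain x y where xy: "p = {x,y}" "x \<in> nb E v" "y \<in> nb E v" "x \<noteq> y" using NE_elem[OF pNE] by blast
    have "card (U p) = (card (nb E v) - card p) choose (t - 1 - card p)"
      unfolding U_def by (rule card_supsets) (use finnb xy assms(1) in auto)
    then show ?thesis using xy assms(1,2) by (simp add: eval_nat_numeral)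
  qed
  obtain e where e: "e \<in> p2" "e \<notin> p1" using assms(5) ab cd by blast
  define P where "P = {a,b,e}"
  have cP: "card P = 3" using ab e unfolding P_def by auto
  have PN: "P \<subseteq> nb E v" using ab e cd unfolding P_def by auto
  have "U p1 \<inter> U p2 \<subseteq> {F. F \<subseteq> nb E v \<and> card F = t - 1 \<and> P \<subseteq> F}"
    unfolding U_def P_def using ab e by auto
  then have "card (U p1 \<inter> U p2) \<le> card {F. F \<subseteq> nb E v \<and> card F = t - 1 \<and> P \<subseteq> F}"
    by (rule card_mono[rotated]) (use finnb in simp)
  also have "\<dots> = (card (nb E v) - card P) choose (t - 1 - card P)"
    by (rule card_supsets) (use finnb PN cP assms(1) in auto)
  also have "\<dots> = (r-3) choose (t-4)" using cP assms(1,2) by (simp add: eval_nat_numeral)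
  finally have i: "card (U p1 \<inter> U p2) \<le> (r-3) choose (t-4)" .
  have fU: "finite (U p)" for p unfolding U_def using finnb by simp
  have "card (U p1 \<union> U p2) + card (U p1 \<inter> U p2) = card (U p1) + card (U p2)"
    using card_Un_Int[OF fU fU] by simp
  moreover have "card (U p1 \<union> U p2) \<le> card (M v)"
  proof (rule card_mono)
    show "finite (M v)"
    proof -
      have "M v \<subseteq> Pow (nb E v)" by (auto simp: M_def)
      then show ?thesis using finnb finite_subset by blast
    qed
    show "U p1 \<union> U p2 \<subseteq> M v" using assms(3,4) unfolding U_def M_def by blast
  qed
  ultimately show ?thesis using i cU[OF assms(3)] cU[OF assms(4)] by linarith
qed

end



context cg begin

definition nn where "nn S u = {w \<in> S. w \<noteq> u \<and> {w,u} \<notin> E}"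

lemma nb_ne: "w \<in> nb E u \<Longrightarrow> w \<noteq> u" using edge by (auto simp: nb_def)

lemma S_facts: assumes "v \<in> V" "card (nb E v) = r"
  shows "insert v (nb E v) \<subseteq> V" "card (insert v (nb E v)) = r + 1" "finite (insert v (nb E v))"
proof -
  show "insert v (nb E v) \<subseteq> V" using nbV assms by blast
  have "v \<notin> nb E v" using nbV by blast
  then show "card (insert v (nb E v)) = r + 1" using assms finnb by simp
  show "finite (insert v (nb E v))" using finnb by simp
qed

lemma clique_pair: "K \<in> cl t V E \<Longrightarrow> a \<in> K \<Longrightarrow> b \<in> K \<Longrightarrow> a \<noteq> b \<Longrightarrow> {a,b} \<in> E"
  by (auto simp: cl_def is_clique_def)

lemma cl_finK: "K \<in> cl t V E \<Longrightarrow> finite K \<and> K \<subseteq> V \<and> card K = t"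
  using finV finite_subset by (auto simp: cl_def is_clique_def)

lemma out_le:
  assumes "v \<in> V" "card (nb E v) = r" "u \<in> insert v (nb E v)"
  shows "card (nb E u - insert v (nb E v)) \<le> card (nn (insert v (nb E v)) u)"
proof -
  define S where "S = insert v (nb E v)"
  have SV: "S \<subseteq> V" and cS: "card S = r+1" and fS: "finite S" using S_facts[OF assms(1,2)] S_def by auto
  have uS: "u \<in> S" using assms(3) S_def by simp
  have uV: "u \<in> V" using uS SV by blast
  have i: "nb E u \<inter> S = (S - {u}) - nn S u" using nb_ne by (auto simp: nn_def nb_def)
  have nnsub: "nn S u \<subseteq> S - {u}" by (auto simp: nn_def)
  have fnn: "finite (nn S u)" using fS by (auto simp: nn_def)
  have cSu: "card (S - {u}) = r" using cS uS fS by simp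
  have c1: "card (nb E u \<inter> S) = r - card (nn S u)"
    unfolding i using card_Diff_subset[OF fnn nnsub] cSu by simp
  have "nb E u = (nb E u \<inter> S) \<union> (nb E u - S)" by blast
  then have c2: "card (nb E u) = card (nb E u \<inter> S) + card (nb E u - S)"
    using finnb by (metis card_Un_disjoint Diff_disjoint Int_Diff_disjoint finite_Diff finite_Int inf_commute)
  have "card (nb E u) \<le> r" using deg uV by simp
  moreover have "card (nn S u) \<le> r" using card_mono[OF finite_Diff[OF fS] nnsub] cSu by simp
  ultimately show ?thesis using c1 c2 unfolding S_def[symmetric] by linarith
qed

lemma nn_v: "nn (insert v (nb E v)) v = {}"
  by (auto simp: nn_def nb_def)

lemma nn_NE:
  assumes "u \<in> insert v (nb E v)" "w \<in> nn (insert v (nb E v)) u"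
  shows "{w,u} \<in> NE v"
proof -
  have w: "w \<in> insert v (nb E v)" "w \<noteq> u" "{w,u} \<notin> E" using assms(2) by (auto simp: nn_def)
  have uv: "u \<noteq> v" using assms nn_v by auto
  then have un: "u \<in> nb E v" using assms(1) by simp
  have "w \<noteq> v"
  proof
    assume "w = v"
    then have "{u,w} \<in> E" using un by (simp add: nb_def)
    then show False using w(3) by (simp add: insert_commute)
  qed
  then have "w \<in> nb E v" using w(1) by simp
  then show ?thesis using un w unfolding NE_def by blast
qed

lemma S_nonedge:
  assumes "a \<in> insert v (nb E v)" "b \<in> insert v (nb E v)" "a \<noteq> b" "{a,b} \<notin> E"
  shows "{a,b} \<in> NE v"
  using nn_NE[of b v a] assms by (auto simp: nn_def)

lemma core_in:
  assumes "v \<in> V" "card (nb E v) = r" "K \<in> cl t V E" "u \<in> K" "u \<in> insert v (nb E v)"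
    "nn (insert v (nb E v)) u = {}"
  shows "K \<subseteq> insert v (nb E v)"
proof
  fix w assume wK: "w \<in> K"
  have "card (nb E u - insert v (nb E v)) \<le> 0" using out_le[OF assms(1,2,5)] assms(6) by simp
  then have e: "nb E u - insert v (nb E v) = {}" using finnb by simp
  show "w \<in> insert v (nb E v)"
  proof (cases "w = u")
    case True then show ?thesis using assms(5) by simp
  next
    case False
    then have "{w,u} \<in> E" using clique_pair[OF assms(3) wK assms(4)] by simp
    then have "w \<in> nb E u" by (simp add: nb_def)
    then show ?thesis using e by blast
  qed
qed

lemma single_out:
  assumes "K \<in> cl t V E" "K \<inter> S = {u}"
  shows "t - 1 \<le> card (nb E u - S)"
proof -
  have K: "finite K" "card K = t" using cl_finK[OF assms(1)] by auto
  have uK: "u \<in> K" using assms(2) by blast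
  have "K - {u} \<subseteq> nb E u - S"
  proof
    fix w assume w: "w \<in> K - {u}"
    then have "{w,u} \<in> E" using clique_pair[OF assms(1)] uK by blast
    moreover have "w \<notin> S" using w assms(2) by blast
    ultimately show "w \<in> nb E u - S" by (simp add: nb_def)
  qed
  moreover have "card (K - {u}) = t - 1" using K uK by simp
  ultimately show ?thesis using card_mono[of "nb E u - S" "K - {u}"] finnb by simp
qed

lemma caseA:
  assumes "v \<in> V" "card (nb E v) = r" "NE v = {{x,y}}"
  shows "card {K \<in> cl t V E. K \<inter> insert v (nb E v) \<noteq> {}} = ((r+1) choose t) - ((r-1) choose (t-2))"
proof -
  define S where "S = insert v (nb E v)"
  have SV: "S \<subseteq> V" and cS: "card S = r+1" and fS: "finite S" using S_facts[OF assms(1,2)] S_def by auto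
  have "{x,y} \<in> NE v" using assms(3) by simp
  then obtain a b where ab: "{x,y} = {a,b}" "a \<in> nb E v" "b \<in> nb E v" "a \<noteq> b" "{a,b} \<notin> E"
    using NE_elem by blast
  have xy: "x \<noteq> y" "x \<in> S" "y \<in> S" "{x,y} \<notin> E" using ab unfolding S_def by (auto simp: doubleton_eq_iff insert_commute)
  have nnxy: "{w,u} = {x,y}" if "u \<in> S" "w \<in> nn S u" for u w
    using nn_NE[of u v w] that assms(3) unfolding S_def by simp
  have nn_core: "nn S u = {}" if "u \<in> S" "u \<notin> {x,y}" for u
  proof (rule ccontr)
    assume "nn S u \<noteq> {}"
    then obtain w where "w \<in> nn S u" by blast
    then have "{w,u} = {x,y}" using nnxy that by blast
    then show False using that by (auto simp: doubleton_eq_iff)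
  qed
  have nn_end: "card (nn S u) \<le> 1" if "u \<in> S" "u \<in> {x,y}" for u
  proof -
    have "nn S u \<subseteq> {x,y} - {u}"
    proof
      fix w assume w: "w \<in> nn S u"
      then have "{w,u} = {x,y}" using nnxy that by blast
      moreover have "w \<noteq> u" using w by (simp add: nn_def)
      ultimately show "w \<in> {x,y} - {u}" by (auto simp: doubleton_eq_iff)
    qed
    moreover have "card ({x,y} - {u}) = 1" using that xy by auto
    ultimately show ?thesis using card_mono[of "{x,y} - {u}" "nn S u"] by simp
  qed
  have inS: "K \<subseteq> S" if K: "K \<in> cl t V E" "K \<inter> S \<noteq> {}" for K
  proof (rule ccontr)
    assume nS: "\<not> K \<subseteq> S"
    have sub: "K \<inter> S \<subseteq> {x,y}"
    proof
      fix u assume u: "u \<in> K \<inter> S"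
      show "u \<in> {x,y}"
      proof (rule ccontr)
        assume "u \<notin> {x,y}"
        then have "nn S u = {}" using nn_core u by blast
        then have "K \<subseteq> S" using core_in[OF assms(1,2) K(1), of u] u unfolding S_def by blast
        then show False using nS by simp
      qed
    qed
    obtain u where u: "u \<in> K \<inter> S" using K(2) by blast
    have single: "K \<inter> S = {u}"
    proof
      show "{u} \<subseteq> K \<inter> S" using u by simp
      show "K \<inter> S \<subseteq> {u}"
      proof
        fix u' assume u': "u' \<in> K \<inter> S"
        show "u' \<in> {u}"
        proof (rule ccontr)
          assume "u' \<notin> {u}"
          then have "u' \<noteq> u" by simp
          moreover have "u \<in> {x,y}" "u' \<in> {x,y}" using sub u u' by auto
          ultimately have "x \<in> K" "y \<in> K" using u u' by auto
          then have "{x,y} \<in> E" using clique_pair[OF K(1)] xy(1) by blast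
          then show False using xy(4) by simp
        qed
      qed
    qed
    have "t - 1 \<le> card (nb E u - S)" by (rule single_out[OF K(1) single])
    also have "\<dots> \<le> card (nn S u)" using out_le[OF assms(1,2), of u] u unfolding S_def by blast
    also have "\<dots> \<le> 1" using nn_end[of u] u sub by blast
    finally show False using t3 by simp
  qed
  have eq: "{K \<in> cl t V E. K \<inter> S \<noteq> {}} = {F. F \<subseteq> S \<and> card F = t \<and> \<not> {x,y} \<subseteq> F}"
  proof (rule set_eqI, rule iffI)
    fix K assume "K \<in> {K \<in> cl t V E. K \<inter> S \<noteq> {}}"
    then have K: "K \<in> cl t V E" "K \<inter> S \<noteq> {}" by auto
    have "\<not> {x,y} \<subseteq> K"
    proof
      assume "{x,y} \<subseteq> K"
      then have "{x,y} \<in> E" using clique_pair[OF K(1)] xy(1) by blast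
      then show False using xy(4) by simp
    qed
    then show "K \<in> {F. F \<subseteq> S \<and> card F = t \<and> \<not> {x,y} \<subseteq> F}" using inS[OF K] cl_finK[OF K(1)] by auto
  next
    fix F assume "F \<in> {F. F \<subseteq> S \<and> card F = t \<and> \<not> {x,y} \<subseteq> F}"
    then have F: "F \<subseteq> S" "card F = t" "\<not> {x,y} \<subseteq> F" by auto
    have "is_clique V E F"
      unfolding is_clique_def
    proof (intro conjI ballI impI)
      show "F \<subseteq> V" using F(1) SV by blast
      fix a b assume ab: "a \<in> F" "b \<in> F" "a \<noteq> b"
      show "{a,b} \<in> E"
      proof (rule ccontr)
        assume "{a,b} \<notin> E"
        then have "{a,b} \<in> NE v" using S_nonedge[of a v b] ab F(1) unfolding S_def by blast
        then have "{a,b} = {x,y}" using assms(3) by simp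
        then show False using ab F(3) by auto
      qed
    qed
    moreover have "F \<noteq> {}" using F(2) t3 by auto
    ultimately show "F \<in> {K \<in> cl t V E. K \<inter> S \<noteq> {}}" using F by (auto simp: cl_def)
  qed
  have c2: "card {x,y} = 2" using xy by simp
  have "card {F. F \<subseteq> S \<and> card F = t \<and> \<not> {x,y} \<subseteq> F} = (card S choose t) - ((card S - card {x,y}) choose (t - card {x,y}))"
    by (rule card_nonsupsets[OF fS]) (use xy c2 t3 in auto)
  then show ?thesis unfolding S_def[symmetric] eq using cS c2 by simp
qed

end



lemma c42: "(4::nat) choose 2 = 6" by (simp add: numeral_eq_Suc)
lemma c32: "(3::nat) choose 2 = 3" by (simp add: numeral_eq_Suc)

context cg begin

lemma caseB:
  assumes t3e: "t = 3" and r5: "5 \<le> r" and v: "v \<in> V" "card (nb E v) = r"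
    and NE2: "NE v = {p1,p2}" and pp: "p1 \<noteq> p2"
  shows "card {K \<in> cl t V E. K \<inter> insert v (nb E v) \<noteq> {}} + (r - 1) \<le> (r+1) choose 3"
proof -
  define S where "S = insert v (nb E v)"
  have SV: "S \<subseteq> V" and cS: "card S = r+1" and fS: "finite S" using S_facts[OF v] S_def by auto
  define W where "W = p1 \<union> p2"
  obtain a b where ab: "p1 = {a,b}" "a \<in> nb E v" "b \<in> nb E v" "a \<noteq> b" "{a,b} \<notin> E"
    using NE_elem[of p1 v] NE2 by auto
  obtain c d where cd: "p2 = {c,d}" "c \<in> nb E v" "d \<in> nb E v" "c \<noteq> d" "{c,d} \<notin> E"
    using NE_elem[of p2 v] NE2 by auto
  have cp: "card p1 = 2" "card p2 = 2" using ab cd by auto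
  have WS: "W \<subseteq> S" using ab cd unfolding W_def S_def by auto
  have fp: "finite p1" "finite p2" using ab cd by auto
  have fW: "finite W" using fp unfolding W_def by simp
  define I where "I = card (p1 \<inter> p2)"
  have IW: "card W + I = 4" using card_Un_Int[OF fp] cp unfolding W_def I_def by simp
  have I1: "I \<le> 1"
  proof (rule ccontr)
    assume "\<not> I \<le> 1"
    then have "card p1 \<le> card (p1 \<inter> p2)" "card p2 \<le> card (p1 \<inter> p2)" using cp unfolding I_def by auto
    then have "p1 \<inter> p2 = p1" "p1 \<inter> p2 = p2" using card_seteq[OF fp(1), of "p1 \<inter> p2"] card_seteq[OF fp(2), of "p1 \<inter> p2"] by auto
    then show False using pp by simp
  qed
  have nnW: "{w,u} = p1 \<or> {w,u} = p2" if "u \<in> S" "w \<in> nn S u" for u w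
    using nn_NE[of u v w] that NE2 unfolding S_def by auto
  have nn2: "W = {u,w1,w2} \<and> u \<in> p1 \<inter> p2" if nh: "u \<in> S" "w1 \<in> nn S u" "w2 \<in> nn S u" "w1 \<noteq> w2" for u w1 w2
  proof -
    have h1: "{w1,u} = p1 \<or> {w1,u} = p2" using nnW nh by blast
    have h2: "{w2,u} = p1 \<or> {w2,u} = p2" using nnW nh by blast
    have "w1 \<noteq> u" using nh by (simp add: nn_def)
    then have ne: "{w1,u} \<noteq> {w2,u}" using nh(4) by (auto simp: doubleton_eq_iff)
    show ?thesis
    proof (cases "{w1,u} = p1")
      case True
      then have "{w2,u} = p2" using h2 ne by auto
      then show ?thesis using True unfolding W_def by auto
    next
      case False
      then have "{w1,u} = p2" "{w2,u} = p1" using h1 h2 ne by auto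
      then show ?thesis unfolding W_def by auto
    qed
  qed
  have fnn: "finite (nn S u)" for u using fS by (auto simp: nn_def)
  have nn_sub: "nn S u \<subseteq> W - {u}" if "u \<in> S" for u
  proof
    fix w assume w: "w \<in> nn S u"
    then have "{w,u} = p1 \<or> {w,u} = p2" using nnW that by blast
    moreover have "w \<noteq> u" using w by (simp add: nn_def)
    ultimately show "w \<in> W - {u}" unfolding W_def by auto
  qed
  have nn_ge2: "\<exists>w1 w2. w1 \<in> nn S u \<and> w2 \<in> nn S u \<and> w1 \<noteq> w2" if "2 \<le> card (nn S u)" for u
  proof (rule ccontr)
    assume "\<not> (\<exists>w1 w2. w1 \<in> nn S u \<and> w2 \<in> nn S u \<and> w1 \<noteq> w2)"
    then have "card (nn S u) \<le> Suc 0" using card_le_Suc0_iff_eq[OF fnn] by blast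
    then show False using that by simp
  qed
  have nn_le2: "card (nn S u) \<le> 2" if uS: "u \<in> S" for u
  proof (cases "\<exists>w1 w2. w1 \<in> nn S u \<and> w2 \<in> nn S u \<and> w1 \<noteq> w2")
    case True
    then obtain w1 w2 where w: "w1 \<in> nn S u" "w2 \<in> nn S u" "w1 \<noteq> w2" by blast
    have "W = {u,w1,w2}" using nn2[OF uS w] by simp
    then have "nn S u \<subseteq> {w1,w2}" using nn_sub[OF uS] by auto
    then have "card (nn S u) \<le> card {w1,w2}" by (rule card_mono[rotated]) simp
    also have "\<dots> \<le> 2" by (simp add: card_insert_if)
    finally show ?thesis .
  next
    case False
    then have "card (nn S u) \<le> Suc 0" using card_le_Suc0_iff_eq[OF fnn] by blast
    then show ?thesis by simp
  qed
  have fC: "finite (cl t V E)" using cl_fin[OF finV] .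
  have outnn: "nn S u \<noteq> {}" if "K \<in> cl t V E" "\<not> K \<subseteq> S" "u \<in> K \<inter> S" for K u
    using core_in[OF v that(1), of u] that unfolding S_def by blast
  have outW: "u \<in> W" if hh: "K \<in> cl t V E" "\<not> K \<subseteq> S" "u \<in> K \<inter> S" for K u
  proof -
    obtain w where w: "w \<in> nn S u" using outnn[OF hh] by blast
    then have "{w,u} = p1 \<or> {w,u} = p2" using nnW hh by blast
    then show ?thesis unfolding W_def by auto
  qed
  define Meet where "Meet = {K \<in> cl t V E. K \<inter> S \<noteq> {}}"
  define In where "In = {K \<in> cl t V E. K \<subseteq> S}"
  define Out1 where "Out1 = {K \<in> cl t V E. \<not> K \<subseteq> S \<and> card (K \<inter> S) = 1}"
  define Out2 where "Out2 = {K \<in> cl t V E. \<not> K \<subseteq> S \<and> card (K \<inter> S) = 2}"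
  have Meet_sub: "Meet \<subseteq> In \<union> (Out1 \<union> Out2)"
  proof
    fix K assume "K \<in> Meet"
    then have K: "K \<in> cl t V E" "K \<inter> S \<noteq> {}" by (auto simp: Meet_def)
    have fK: "finite K" "card K = 3" using cl_finK[OF K(1)] t3e by auto
    show "K \<in> In \<union> (Out1 \<union> Out2)"
    proof (cases "K \<subseteq> S")
      case True then show ?thesis using K by (simp add: In_def)
    next
      case False
      then have "K \<inter> S \<subset> K" by blast
      then have "card (K \<inter> S) < 3" using psubset_card_mono[OF fK(1)] fK(2) by metis
      moreover have "card (K \<inter> S) \<noteq> 0" using K(2) fK(1) by simp
      ultimately have "card (K \<inter> S) = 1 \<or> card (K \<inter> S) = 2" by linarith
      then show ?thesis using K False by (auto simp: Out1_def Out2_def)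
    qed
  qed
  have fIn: "finite In" "finite Out1" "finite Out2" using fC by (auto simp: In_def Out1_def Out2_def)
  have cMeet: "card Meet \<le> card In + card Out1 + card Out2"
  proof -
    have "card Meet \<le> card (In \<union> (Out1 \<union> Out2))" by (rule card_mono) (use fIn Meet_sub in auto)
    also have "\<dots> \<le> card In + card (Out1 \<union> Out2)" by (rule card_Un_le)
    also have "\<dots> \<le> card In + (card Out1 + card Out2)" using card_Un_le[of Out1 Out2] by simp
    finally show ?thesis by simp
  qed
  define Sub where "Sub = {F. F \<subseteq> S \<and> card F = 3}"
  define U where "U p = {F. F \<subseteq> S \<and> card F = 3 \<and> p \<subseteq> F}" for p
  have fSub: "finite Sub" using fS by (simp add: Sub_def)
  have USub: "U p \<subseteq> Sub" for p by (auto simp: U_def Sub_def)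
  have In_eq: "In = Sub - (U p1 \<union> U p2)"
  proof (rule set_eqI, rule iffI)
    fix K assume "K \<in> In"
    then have K: "K \<in> cl t V E" "K \<subseteq> S" by (auto simp: In_def)
    have nc: "\<not> p \<subseteq> K" if "p = {x,y}" "x \<noteq> y" "{x,y} \<notin> E" for p x y
    proof
      assume "p \<subseteq> K"
      then have "{x,y} \<in> E" using clique_pair[OF K(1)] that by auto
      then show False using that by simp
    qed
    have "\<not> p1 \<subseteq> K" "\<not> p2 \<subseteq> K" using nc ab cd by blast+
    then show "K \<in> Sub - (U p1 \<union> U p2)" using K cl_finK[OF K(1)] t3e by (auto simp: Sub_def U_def)
  next
    fix F assume "F \<in> Sub - (U p1 \<union> U p2)"
    then have F: "F \<subseteq> S" "card F = 3" "\<not> p1 \<subseteq> F" "\<not> p2 \<subseteq> F" by (auto simp: Sub_def U_def)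
    have "is_clique V E F"
      unfolding is_clique_def
    proof (intro conjI ballI impI)
      show "F \<subseteq> V" using F(1) SV by blast
      fix x y assume xy: "x \<in> F" "y \<in> F" "x \<noteq> y"
      show "{x,y} \<in> E"
      proof (rule ccontr)
        assume "{x,y} \<notin> E"
        then have "{x,y} \<in> NE v" using S_nonedge[of x v y] xy F(1) unfolding S_def by blast
        then have "{x,y} = p1 \<or> {x,y} = p2" using NE2 by simp
        then show False using xy F(3,4) by auto
      qed
    qed
    then show "F \<in> In" using F t3e by (auto simp: In_def cl_def)
  qed
  have cSub: "card Sub = (r+1) choose 3" using fS cS by (simp add: Sub_def n_subsets)
  have cSplit: "card Sub = card In + card (U p1 \<union> U p2)"
  proof -
    have "Sub = In \<union> (U p1 \<union> U p2)" using In_eq USub by blast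
    moreover have "In \<inter> (U p1 \<union> U p2) = {}" using In_eq by blast
    moreover have "finite In" "finite (U p1 \<union> U p2)" using fIn USub finite_subset[OF _ fSub] by auto
    ultimately show ?thesis using card_Un_disjoint by metis
  qed
  have cU: "card (U p) = r - 1" if "p = {x,y}" "x \<in> S" "y \<in> S" "x \<noteq> y" for p x y
  proof -
    have "card (U p) = (card S - card p) choose (3 - card p)"
      unfolding U_def by (rule card_supsets[OF fS]) (use that in auto)
    then show ?thesis using that cS by (simp add: eval_nat_numeral)
  qed
  have cU1: "card (U p1) = r - 1" using cU[OF ab(1) _ _ ab(4)] ab unfolding S_def by auto
  have cU2: "card (U p2) = r - 1" using cU[OF cd(1) _ _ cd(4)] cd unfolding S_def by auto
  have fU: "finite (U p)" for p using USub finite_subset[OF _ fSub] by blast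
  have UUI: "card (U p1 \<union> U p2) + card (U p1 \<inter> U p2) = 2 * (r - 1)"
    using card_Un_Int[OF fU fU, of p1 p2] cU1 cU2 by simp
  have UI: "card (U p1 \<inter> U p2) \<le> I"
  proof -
    have eqI: "U p1 \<inter> U p2 = {F. F \<subseteq> S \<and> card F = 3 \<and> W \<subseteq> F}" unfolding U_def W_def by auto
    show ?thesis
    proof (cases "I = 0")
      case True
      then have "3 < card W" using IW by simp
      then show ?thesis unfolding eqI using card_supsets_big[OF fS WS] by simp
    next
      case False
      then have "card W = 3" "I = 1" using IW I1 by auto
      then show ?thesis unfolding eqI using card_supsets[OF fS WS, of 3] by simp
    qed
  qed
  have Out1_sub: "Out1 \<subseteq> (\<lambda>u. insert u (nb E u - S)) ` (p1 \<inter> p2)"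
  proof
    fix K assume "K \<in> Out1"
    then have K: "K \<in> cl t V E" "\<not> K \<subseteq> S" "card (K \<inter> S) = 1" by (auto simp: Out1_def)
    obtain u where u: "K \<inter> S = {u}" using K(3) card_1_singletonE by blast
    have uS: "u \<in> S" and uK: "u \<in> K" using u by auto
    have fK: "finite K" "card K = 3" using cl_finK[OF K(1)] t3e by auto
    have "t - 1 \<le> card (nb E u - S)" by (rule single_out[OF K(1) u])
    then have g2: "2 \<le> card (nb E u - S)" using t3e by simp
    have le: "card (nb E u - S) \<le> card (nn S u)" using out_le[OF v, of u] uS unfolding S_def by blast
    then obtain w1 w2 where w: "w1 \<in> nn S u" "w2 \<in> nn S u" "w1 \<noteq> w2" using nn_ge2[of u] g2 by force
    have up: "u \<in> p1 \<inter> p2" using nn2[OF uS w] by simp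
    have sub: "K - {u} \<subseteq> nb E u - S"
    proof
      fix w assume w: "w \<in> K - {u}"
      then have "{w,u} \<in> E" using clique_pair[OF K(1)] uK by blast
      moreover have "w \<notin> S" using w u by blast
      ultimately show "w \<in> nb E u - S" by (simp add: nb_def)
    qed
    have "card (nb E u - S) \<le> card (K - {u})" using le nn_le2[OF uS] fK uK by simp
    then have "K - {u} = nb E u - S" using card_seteq[OF _ sub] finnb by blast
    then have "K = insert u (nb E u - S)" using uK by blast
    then show "K \<in> (\<lambda>u. insert u (nb E u - S)) ` (p1 \<inter> p2)" using up by blast
  qed
  have cOut1: "card Out1 \<le> I"
  proof -
    have "card Out1 \<le> card ((\<lambda>u. insert u (nb E u - S)) ` (p1 \<inter> p2))"
      by (rule card_mono[OF _ Out1_sub]) (use fp in simp)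
    also have "\<dots> \<le> card (p1 \<inter> p2)" by (rule card_image_le) (use fp in simp)
    finally show ?thesis unfolding I_def .
  qed
  have Out2_img: "(\<lambda>K. K \<inter> S) ` Out2 \<subseteq> {P. P \<subseteq> W \<and> card P = 2} - {p1,p2}"
  proof
    fix P assume "P \<in> (\<lambda>K. K \<inter> S) ` Out2"
    then obtain K where K: "K \<in> cl t V E" "\<not> K \<subseteq> S" "card (K \<inter> S) = 2" and P: "P = K \<inter> S"
      by (auto simp: Out2_def)
    have "P \<subseteq> W" using outW[OF K(1,2)] P by blast
    moreover have "P \<noteq> p1"
    proof
      assume "P = p1"
      then have "a \<in> K" "b \<in> K" using ab P by auto
      then show False using clique_pair[OF K(1)] ab by blast
    qed
    moreover have "P \<noteq> p2"
    proof
      assume "P = p2"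
      then have "c \<in> K" "d \<in> K" using cd P by auto
      then show False using clique_pair[OF K(1)] cd by blast
    qed
    ultimately show "P \<in> {P. P \<subseteq> W \<and> card P = 2} - {p1,p2}" using K(3) P by auto
  qed
  have Out2_inj: "inj_on (\<lambda>K. K \<inter> S) Out2"
  proof (rule inj_onI, rule ccontr)
    fix K1 K2 assume K1: "K1 \<in> Out2" and K2: "K2 \<in> Out2" and eq: "K1 \<inter> S = K2 \<inter> S" and ne: "K1 \<noteq> K2"
    have K1': "K1 \<in> cl t V E" "\<not> K1 \<subseteq> S" "card (K1 \<inter> S) = 2" using K1 by (auto simp: Out2_def)
    have K2': "K2 \<in> cl t V E" "\<not> K2 \<subseteq> S" "card (K2 \<inter> S) = 2" using K2 by (auto simp: Out2_def)
    obtain x y where xy: "K1 \<inter> S = {x,y}" "x \<noteq> y" using K1'(3) card_2_iff by metis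
    have f1: "finite K1" "card K1 = 3" using cl_finK[OF K1'(1)] t3e by auto
    have f2: "finite K2" "card K2 = 3" using cl_finK[OF K2'(1)] t3e by auto
    have d1: "card (K1 - S) = 1"
    proof -
      have "card (K1 - (K1 \<inter> S)) = card K1 - card (K1 \<inter> S)" by (rule card_Diff_subset) (use f1 in auto)
      moreover have "K1 - (K1 \<inter> S) = K1 - S" by blast
      ultimately show ?thesis using f1 K1'(3) by simp
    qed
    have d2: "card (K2 - S) = 1"
    proof -
      have "card (K2 - (K2 \<inter> S)) = card K2 - card (K2 \<inter> S)" by (rule card_Diff_subset) (use f2 in auto)
      moreover have "K2 - (K2 \<inter> S) = K2 - S" by blast
      ultimately show ?thesis using f2 K2'(3) by simp
    qed
    obtain z1 where z1: "K1 - S = {z1}" using d1 card_1_singletonE by blast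
    obtain z2 where z2: "K2 - S = {z2}" using d2 card_1_singletonE by blast
    have K1e: "K1 = {x,y} \<union> {z1}" using xy z1 by blast
    have K2e: "K2 = {x,y} \<union> {z2}" using xy z2 eq by blast
    have z12: "z1 \<noteq> z2" using ne K1e K2e by blast
    have xS: "x \<in> S" "x \<in> K1" "x \<in> K2" using xy eq by blast+
    have "z1 \<in> nb E x - S"
    proof -
      have "z1 \<in> K1" "z1 \<notin> S" using z1 by auto
      then have "{z1,x} \<in> E" using clique_pair[OF K1'(1)] xS by blast
      then show ?thesis using \<open>z1 \<notin> S\<close> by (simp add: nb_def)
    qed
    moreover have "z2 \<in> nb E x - S"
    proof -
      have "z2 \<in> K2" "z2 \<notin> S" using z2 by auto
      then have "{z2,x} \<in> E" using clique_pair[OF K2'(1)] xS by blast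
      then show ?thesis using \<open>z2 \<notin> S\<close> by (simp add: nb_def)
    qed
    ultimately have "{z1,z2} \<subseteq> nb E x - S" by simp
    then have "card {z1,z2} \<le> card (nb E x - S)" by (rule card_mono[rotated]) (use finnb in simp)
    then have "2 \<le> card (nb E x - S)" using z12 by simp
    also have "\<dots> \<le> card (nn S x)" using out_le[OF v, of x] xS unfolding S_def by blast
    finally obtain w1 w2 where w: "w1 \<in> nn S x" "w2 \<in> nn S x" "w1 \<noteq> w2" using nn_ge2[of x] by force
    have WW: "W = {x,w1,w2}" using nn2[OF xS(1) w] by simp
    have "y \<in> W" using outW[OF K1'(1,2), of y] xy by blast
    then have "y = w1 \<or> y = w2" using WW xy(2) by auto
    then have "y \<in> nn S x" using w by auto
    then have "{y,x} \<notin> E" by (simp add: nn_def)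
    moreover have "{y,x} \<in> E" using clique_pair[OF K1'(1), of y x] xy by auto
    ultimately show False by simp
  qed
  have cOut2: "card Out2 \<le> (card W choose 2) - 2"
  proof -
    have fPW: "finite {P. P \<subseteq> W \<and> card P = 2}" using fW by simp
    have "card Out2 \<le> card ({P. P \<subseteq> W \<and> card P = 2} - {p1,p2})"
      by (rule card_inj_on_le[OF Out2_inj Out2_img]) (use fPW in simp)
    also have "\<dots> = card {P. P \<subseteq> W \<and> card P = 2} - card {p1,p2}"
      by (rule card_Diff_subset) (use cp W_def in auto)
    also have "\<dots> = (card W choose 2) - 2" using fW pp by (simp add: n_subsets)
    finally show ?thesis .
  qed
  have final: "card Meet + (r - 1) \<le> (r+1) choose 3"
  proof (cases "I = 0")
    case True
    then have "card W = 4" using IW by simp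
    then have "card Out2 \<le> 4" using cOut2 c42 by simp
    then show ?thesis using cMeet cSub cSplit UUI UI cOut1 True r5 by linarith
  next
    case False
    then have "I = 1" "card W = 3" using IW I1 by auto
    then have "card Out2 \<le> 1" using cOut2 c32 by simp
    then show ?thesis using cMeet cSub cSplit UUI UI cOut1 \<open>I = 1\<close> r5 by linarith
  qed
  then show ?thesis unfolding Meet_def S_def .
qed

end



context cg begin

lemma M_le: "card (M v) \<le> card (nb E v) choose (t-1)"
proof -
  have "M v \<subseteq> {F. F \<subseteq> nb E v \<and> card F = t - 1}" by (auto simp: M_def)
  then have "card (M v) \<le> card {F. F \<subseteq> nb E v \<and> card F = t - 1}" by (rule card_mono[rotated]) (use finnb in simp)
  then show ?thesis using finnb by (simp add: n_subsets)
qed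

lemma vertex_bound:
  assumes "v \<in> V" "\<not> (card (nb E v) = r \<and> (card (NE v) = 1 \<or> (t = 3 \<and> 6 \<le> r \<and> card (NE v) = 2)))"
  shows "real (card {K \<in> cl t V E. v \<in> K}) \<le> real t * cc r t"
proof -
  have ce: "card {K \<in> cl t V E. v \<in> K} = card (Q v)" by (rule cnt_eq[OF assms(1)])
  have dle: "card (nb E v) \<le> r" using deg assms(1) by simp
  show ?thesis
  proof (cases "card (nb E v) < r")
    case True
    then have "card (Q v) \<le> (r-1) choose (t-1)" by (rule Q_low)
    then have "real (card (Q v)) \<le> real ((r-1) choose (t-1))" by simp
    also have "\<dots> \<le> real t * cc r t" using bound_low[of t r] t3 tr by simp
    finally show ?thesis unfolding ce .
  next
    case False
    then have dr: "card (nb E v) = r" using dle by simp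
    have ne: "NE v \<noteq> {}" by (rule NE_ne[OF assms(1) dr])
    have n1: "card (NE v) \<noteq> 1" using assms(2) dr by blast
    have "\<not> card (NE v) \<le> Suc 0" using ne n1 NE_fin by (cases "card (NE v)") auto
    then obtain p1 p2 where pp: "p1 \<in> NE v" "p2 \<in> NE v" "p1 \<noteq> p2"
      using card_le_Suc0_iff_eq[OF NE_fin] by blast
    have Qb: "card (Q v) \<le> (r choose (t-1)) - card (M v)" using Q_bound[of v] dr by simp
    have Ml: "card (M v) \<le> r choose (t-1)" using M_le[of v] dr by simp
    have RQ: "real (card (Q v)) \<le> real (r choose (t-1)) - real (card (M v))"
    proof -
      have "real (card (Q v)) \<le> real ((r choose (t-1)) - card (M v))" using Qb by (simp only: of_nat_le_iff)
      also have "\<dots> = real (r choose (t-1)) - real (card (M v))" by (rule of_nat_diff[OF Ml])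
      finally show ?thesis .
    qed
    show ?thesis
    proof (cases "4 \<le> t")
      case True
      have m: "2 * ((r-2) choose (t-3)) \<le> card (M v) + ((r-3) choose (t-4))"
        by (rule M_t4[OF True dr pp])
      then have "2 * real ((r-2) choose (t-3)) \<le> real (card (M v)) + real ((r-3) choose (t-4))"
        by (metis of_nat_add of_nat_le_iff of_nat_mult of_nat_numeral)
      then have "real (card (Q v)) \<le> real (r choose (t-1)) - (2 * real ((r-2) choose (t-3)) - real ((r-3) choose (t-4)))"
        using RQ by linarith
      also have "\<dots> \<le> real t * cc r t" by (rule bound_t4[OF True tr])
      finally show ?thesis unfolding ce .
    next
      case False
      then have te: "t = 3" using t3 by simp
      have "card (NE v) \<le> card (M v)" by (rule M_t3[OF te])
      moreover have "3 \<le> card (NE v) \<or> (card (NE v) = 2 \<and> r \<le> 5)"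
        using assms(2) dr te \<open>\<not> card (NE v) \<le> Suc 0\<close> by auto
      moreover have r3: "3 \<le> r" using t3 tr by simp
      ultimately have "real (card (Q v)) \<le> real (r choose 2) - 3 \<or> (r \<le> 5 \<and> real (card (Q v)) \<le> real (r choose 2) - 2)"
        using RQ te by (auto simp: eval_nat_numeral)
      then have "real (card (Q v)) \<le> real 3 * cc r 3" using bound_t3[OF r3] by auto
      then show ?thesis using ce te by simp
    qed
  qed
qed

end

lemma bin_le2: "n choose k \<le> Suc (Suc n) choose Suc (Suc k)" by simp

lemma main_bound:
  assumes "3 \<le> t" "t \<le> r"
  shows "in_class r r V E \<Longrightarrow> real (card (cl t V E)) \<le> cc r t * real (card V)"
proof (induction "card V" arbitrary: V E rule: less_induct)
  case less
  interpret G: cg V E r t using less.prems assms by unfold_locales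
  show ?case
  proof (cases "\<exists>v\<in>V. card (nb E v) = r \<and> (card (G.NE v) = 1 \<or> (t = 3 \<and> 6 \<le> r \<and> card (G.NE v) = 2))")
    case True
    then obtain v where v: "v \<in> V" "card (nb E v) = r"
      and cv: "card (G.NE v) = 1 \<or> (t = 3 \<and> 6 \<le> r \<and> card (G.NE v) = 2)" by blast
    define S where "S = insert v (nb E v)"
    have SV: "S \<subseteq> V" and cS: "card S = r+1" and fS: "finite S" using G.S_facts[OF v] S_def by auto
    have ble: "(r-1) choose (t-2) \<le> (r+1) choose t"
    proof -
      have "Suc (Suc (r-1)) = r + 1" "Suc (Suc (t-2)) = t" using assms by auto
      then show ?thesis using bin_le2[of "r-1" "t-2"] by simp
    qed
    have rr: "real (r+1) * cc r t = real ((r+1) choose t) - real ((r-1) choose (t-2))"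
      by (simp add: cc_def)
    have mb: "real (card {K \<in> cl t V E. K \<inter> S \<noteq> {}}) \<le> real (r+1) * cc r t"
      using cv
    proof
      assume "card (G.NE v) = 1"
      then obtain p where p: "G.NE v = {p}" using card_1_singletonE by blast
      then obtain x y where "p = {x,y}" using G.NE_elem[of p v] by blast
      then have "G.NE v = {{x,y}}" using p by simp
      then have "card {K \<in> cl t V E. K \<inter> S \<noteq> {}} = ((r+1) choose t) - ((r-1) choose (t-2))"
        using G.caseA[OF v] unfolding S_def by blast
      then show ?thesis using rr ble by (simp add: of_nat_diff)
    next
      assume h: "t = 3 \<and> 6 \<le> r \<and> card (G.NE v) = 2"
      then obtain p1 p2 where pp: "G.NE v = {p1,p2}" "p1 \<noteq> p2" using card_2_iff by metis
      have "card {K \<in> cl t V E. K \<inter> S \<noteq> {}} + (r - 1) \<le> (r+1) choose 3"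
        using G.caseB[OF _ _ v pp] h unfolding S_def by simp
      moreover have "(r-1) choose (t-2) = r - 1" using h by simp
      ultimately show ?thesis using rr h by (simp add: of_nat_diff)
    qed
    have lt: "card (V - S) < card V"
    proof -
      have "card (V - S) = card V - card S" using SV fS by (simp add: card_Diff_subset)
      moreover have "card S \<le> card V" using SV G.finV card_mono by blast
      ultimately show ?thesis using cS by simp
    qed
    have cVS: "real (card (V - S)) = real (card V) - real (r+1)"
    proof -
      have "card (V - S) = card V - card S" using SV fS by (simp add: card_Diff_subset)
      moreover have "card S \<le> card V" using SV G.finV card_mono by blast
      ultimately show ?thesis using cS by (simp add: of_nat_diff)
    qed
    have cls': "in_class r r (V - S) {e \<in> E. e \<subseteq> V - S}" by (rule induced_class[OF less.prems])
    have IH: "real (card (cl t (V - S) {e \<in> E. e \<subseteq> V - S})) \<le> cc r t * real (card (V - S))"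
      by (rule less.hyps[OF lt cls'])
    have sp: "card (cl t V E) = card (cl t (V - S) {e \<in> E. e \<subseteq> V - S}) + card {K \<in> cl t V E. K \<inter> S \<noteq> {}}"
      by (rule card_split[OF G.finV])
    have "real (card (cl t V E)) = real (card (cl t (V - S) {e \<in> E. e \<subseteq> V - S})) + real (card {K \<in> cl t V E. K \<inter> S \<noteq> {}})"
      using sp by simp
    also have "\<dots> \<le> cc r t * real (card (V - S)) + real (r+1) * cc r t" using IH mb by linarith
    also have "\<dots> = cc r t * (real (card (V - S)) + real (r+1))" by (simp add: algebra_simps)
    also have "real (card (V - S)) + real (r+1) = real (card V)" using cVS by simp
    finally have "real (card (cl t V E)) \<le> cc r t * real (card V)" .
    then show ?thesis .
  next
    case False
    then have each: "\<forall>v\<in>V. real (card {K \<in> cl t V E. v \<in> K}) \<le> real t * cc r t"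
      using G.vertex_bound by blast
    have "(\<Sum>v\<in>V. real (card {K \<in> cl t V E. v \<in> K})) \<le> real (card V) * (real t * cc r t)"
      using sum_bounded_above[of V "\<lambda>v. real (card {K \<in> cl t V E. v \<in> K})" "real t * cc r t"] each by simp
    moreover have "(\<Sum>v\<in>V. real (card {K \<in> cl t V E. v \<in> K})) = real t * real (card (cl t V E))"
    proof -
      have "(\<Sum>v\<in>V. real (card {K \<in> cl t V E. v \<in> K})) = real (\<Sum>v\<in>V. card {K \<in> cl t V E. v \<in> K})"
        by simp
      also have "\<dots> = real (t * card (cl t V E))" using sum_cnt[OF G.finV] by simp
      finally show ?thesis by simp
    qed
    ultimately have "real t * real (card (cl t V E)) \<le> real t * (cc r t * real (card V))"
      by (simp add: algebra_simps)
    moreover have "real t > 0" using assms by simp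
    ultimately show ?thesis by simp
  qed
qed

theorem mainTheorem10:
  fixes r t :: nat
  assumes "3 \<le> t" and "t \<le> r"
  shows "f_t t r r = rho_t t (turan_V (r + 1)) (turan_E (r + 1) r)
       \<and> rho_t t (turan_V (r + 1)) (turan_E (r + 1) r)
           = (1 / real (r + 1)) * (real ((r + 1) choose t) - real ((r - 1) choose (t - 2)))"
proof -
  have r1: "1 \<le> r" and t2: "2 \<le> t" using assms by auto
  have ble: "(r-1) choose (t-2) \<le> (r+1) choose t"
  proof -
    have "Suc (Suc (r-1)) = r + 1" "Suc (Suc (t-2)) = t" using assms by auto
    then show ?thesis using bin_le2[of "r-1" "t-2"] by simp
  qed
  have cardT: "card (turan_V (r+1)) = r + 1" by (simp add: turan_V_def)
  have rho: "rho_t t (turan_V (r + 1)) (turan_E (r + 1) r) = cc r t"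
    unfolding rho_t_def turan_kt[OF r1 t2] cardT cc_def using ble by (simp add: of_nat_diff)
  have sup: "f_t t r r = cc r t"
    unfolding f_t_def
  proof (rule cSup_eq_maximum)
    show "cc r t \<in> {rho_t t V E |V E. in_class r r V E \<and> 1 \<le> card V}"
      using turan_class[OF r1] cardT rho[symmetric] by force
    fix x assume "x \<in> {rho_t t V E |V E. in_class r r V E \<and> 1 \<le> card V}"
    then obtain V E where x: "x = rho_t t V E" "in_class r r V E" "1 \<le> card V" by blast
    have "real (card (cl t V E)) \<le> cc r t * real (card V)" by (rule main_bound[OF assms x(2)])
    moreover have "real (card V) > 0" using x(3) by simp
    ultimately show "x \<le> cc r t"
      unfolding x(1) rho_t_def k_t_def cl_def[symmetric] by (simp add: divide_le_eq)
  qed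
  show ?thesis using sup rho by (simp add: cc_def)
qed


end
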